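(* Let $A\in\mathbb{C}^{m\times n}$ have rank $r$, $B\in\mathbb{C}^{m\times n}$ have rank $s$, and $E=B-A$. Then $$\|B^{\dagger}-A^{\dagger}\|_{F}^{2}\leq\min\big\{\beta_{1}+\|B^{\dagger}EA^{\dagger}\|_{F}^{2},\ \beta_{2}+\|A^{\dagger}EB^{\dagger}\|_{F}^{2}\big\},$$ where $$\beta_{1}:=\|A^{\dagger}\|_{2}^{4}\big(\|E\|_{F}^{2}-\|EB^{\dagger}B\|_{F}^{2}\big)+\|B^{\dagger}\|_{2}^{4}\big(\|E\|_{F}^{2}-\|AA^{\dagger}E\|_{F}^{2}\big),$$ $$\beta_{2}:=\|A^{\dagger}\|_{2}^{4}\big(\|E\|_{F}^{2}-\|BB^{\dagger}E\|_{F}^{2}\big)+\|B^{\dagger}\|_{2}^{4}\big(\|E\|_{F}^{2}-\|EA^{\dagger}A\|_{F}^{2}\big).$$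
   Context: $M^{\dagger}$ denotes the Moore–Penrose inverse of $M$, $\|\cdot\|_{2}$ the spectral norm and $\|\cdot\|_{F}$ the Frobenius norm. *)

theory Defs
  imports "HOL-Analysis.Analysis"
begin

text \<open>Complex m x n matrices are rendered as complex^'n^'m (rows indexed by 'm).\<close>

definition conj_transpose :: "complex^'n^'m \<Rightarrow> complex^'m^'n" where
  "conj_transpose A = (\<chi> i j. cnj (A $ j $ i))"

definition mp_inverse :: "complex^'n^'m \<Rightarrow> complex^'m^'n" where
  "mp_inverse A = (THE X. A ** X ** A = A \<and> X ** A ** X = X \<and>
      conj_transpose (A ** X) = A ** X \<and> conj_transpose (X ** A) = X ** A)"

definition frob_norm :: "complex^'n^'m \<Rightarrow> real" where
  "frob_norm A = sqrt (\<Sum>i\<in>UNIV. \<Sum>j\<in>UNIV. (cmod (A $ i $ j))\<^sup>2)"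

definition spec_norm :: "complex^'n^'m \<Rightarrow> real" where
  "spec_norm A = onorm (\<lambda>x::complex^'n. A *v x)"

end

theory Submission
  imports Defs
begin

abbreviation ct where "ct \<equiv> conj_transpose"

lemma ct_nth[simp]: "ct M $ i $ j = cnj (M $ j $ i)"
  by (simp add: conj_transpose_def)

lemma ct_ct[simp]: "ct (ct M) = M"
  by (simp add: vec_eq_iff)

lemma ct_mult: "ct (M ** N) = ct N ** ct M"
  by (simp add: vec_eq_iff matrix_matrix_mult_def mult.commute)

lemma ct_diff: "ct (M - N) = ct M - ct N"
  by (simp add: vec_eq_iff)

lemma ct_add: "ct (M + N) = ct M + ct N"
  by (simp add: vec_eq_iff)

lemma ct_uminus: "ct (- M) = - ct M"
  by (simp add: vec_eq_iff)

lemma mm_diff_l: "(M::'a::ring_1^'n^'m) ** (N - K) = M ** N - M ** K"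
  by (simp add: vec_eq_iff matrix_matrix_mult_def algebra_simps sum_subtractf)

lemma mm_diff_r: "((N::'a::ring_1^'n^'m) - K) ** M = N ** M - K ** M"
  by (simp add: vec_eq_iff matrix_matrix_mult_def algebra_simps sum_subtractf)

lemma mm_neg_l: "(M::'a::ring_1^'n^'m) ** (- N) = - (M ** N)"
  by (simp add: vec_eq_iff matrix_matrix_mult_def sum_negf)

lemma mm_neg_r: "(- (N::'a::ring_1^'n^'m)) ** M = - (N ** M)"
  by (simp add: vec_eq_iff matrix_matrix_mult_def sum_negf)

lemma inner_complex_cnj: "inner (a::complex) b = Re (a * cnj b)"
  by (simp add: inner_complex_def)

lemma inner_adj: "inner (M *v x) y = inner x (ct M *v y)"
proof -
  have "inner (M *v x) y = (\<Sum>i\<in>UNIV. \<Sum>j\<in>UNIV. Re (M$i$j * x$j * cnj (y$i)))"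
    by (simp add: inner_vec_def matrix_vector_mult_def inner_complex_cnj sum_distrib_right Re_sum)
  also have "\<dots> = (\<Sum>j\<in>UNIV. \<Sum>i\<in>UNIV. Re (M$i$j * x$j * cnj (y$i)))"
    by (rule sum.swap)
  also have "\<dots> = inner x (ct M *v y)"
    by (simp add: inner_vec_def matrix_vector_mult_def inner_complex_cnj sum_distrib_left Re_sum mult_ac)
  finally show ?thesis .
qed

lemma norm_sq_vec: "(norm (x::complex^'n))^2 = (\<Sum>i\<in>UNIV. (cmod (x$i))^2)"
  by (simp add: norm_vec_def L2_set_def sum_nonneg)

lemma frob_sq: "(frob_norm M)^2 = (\<Sum>i\<in>UNIV. \<Sum>j\<in>UNIV. (cmod (M$i$j))^2)"
  unfolding frob_norm_def
  apply (rule real_sqrt_pow2) apply (rule sum_nonneg)+ apply simp done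

lemma frob_nonneg: "frob_norm M \<ge> 0"
  unfolding frob_norm_def
  apply (rule real_sqrt_ge_zero) apply (rule sum_nonneg)+ apply simp done

lemma frob_cols: "(frob_norm M)^2 = (\<Sum>j\<in>UNIV. (norm (column j M))^2)"
  unfolding frob_sq norm_sq_vec column_def by (subst sum.swap) simp

lemma frob_ct: "frob_norm (ct M) = frob_norm M"
proof -
  have "(frob_norm (ct M))^2 = (frob_norm M)^2"
    unfolding frob_sq by (subst sum.swap) simp
  then show ?thesis using frob_nonneg
    by (metis power2_eq_iff_nonneg)
qed

lemma frob_uminus: "frob_norm (- M) = frob_norm M"
  by (simp add: frob_norm_def)

lemma column_mult: "column j (M ** N) = M *v column j N"
  by (simp add: vec_eq_iff column_def matrix_matrix_mult_def matrix_vector_mult_def)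

lemma column_diff: "column j (M - N) = column j M - column j N"
  by (simp add: vec_eq_iff column_def)

lemma bl_mv: "bounded_linear (\<lambda>x::complex^'n. (M::complex^'n^'m) *v x)"
  by (simp add: linear_conv_bounded_linear)

lemma spec_bound: "norm (M *v x) \<le> spec_norm M * norm x"
  unfolding spec_norm_def by (rule onorm[OF bl_mv])

lemma spec_nonneg: "spec_norm M \<ge> 0"
  unfolding spec_norm_def by (rule onorm_pos_le[OF bl_mv])

lemma spec_ct: "spec_norm (ct M) \<le> spec_norm M"
  unfolding spec_norm_def[of "ct M"]
proof (rule onorm_le)
  fix x
  have "(norm (ct M *v x))^2 = inner (ct M *v x) (ct M *v x)"
    by (simp add: power2_norm_eq_inner)
  also have "\<dots> = inner x (M *v (ct M *v x))"
    by (metis inner_adj inner_commute ct_ct)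
  also have "\<dots> \<le> norm x * norm (M *v (ct M *v x))"
    by (rule Cauchy_Schwarz_ineq2[THEN order_trans[OF abs_ge_self]])
  also have "\<dots> \<le> norm x * (spec_norm M * norm (ct M *v x))"
    by (simp add: mult_left_mono spec_bound)
  finally have h: "(norm (ct M *v x))^2 \<le> spec_norm M * norm x * norm (ct M *v x)"
    by (simp add: mult_ac)
  show "norm (ct M *v x) \<le> spec_norm M * norm x"
  proof (cases "norm (ct M *v x) = 0")
    case True then show ?thesis using mult_nonneg_nonneg[OF spec_nonneg[of M] norm_ge_zero[of x]] by simp
  next
    case False
    then have "norm (ct M *v x) > 0" by simp
    with h show ?thesis by (simp add: power2_eq_square)
  qed
qed

lemma frob_mult_l: "frob_norm (M ** N) \<le> spec_norm M * frob_norm N"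
proof -
  have "(frob_norm (M ** N))^2 = (\<Sum>j\<in>UNIV. (norm (M *v column j N))^2)"
    by (simp add: frob_cols column_mult)
  also have "\<dots> \<le> (\<Sum>j\<in>UNIV. (spec_norm M * norm (column j N))^2)"
    by (intro sum_mono power_mono spec_bound norm_ge_zero)
  also have "\<dots> = (spec_norm M * frob_norm N)^2"
    by (simp add: frob_cols power_mult_distrib sum_distrib_left)
  finally show ?thesis
    using spec_nonneg frob_nonneg by (meson mult_nonneg_nonneg power2_le_imp_le)
qed

lemma frob_mult_r: "frob_norm (N ** M) \<le> frob_norm N * spec_norm M"
proof -
  have "frob_norm (N ** M) = frob_norm (ct M ** ct N)"
    by (metis ct_mult frob_ct)
  also have "\<dots> \<le> spec_norm (ct M) * frob_norm (ct N)" by (rule frob_mult_l)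
  also have "\<dots> \<le> spec_norm M * frob_norm N"
    by (simp add: frob_ct frob_nonneg mult_right_mono spec_ct)
  finally show ?thesis by (simp add: mult_ac)
qed

lemma pyth_l:
  assumes "ct P = P" "P ** P = P"
  shows "(frob_norm M)^2 = (frob_norm (P ** M))^2 + (frob_norm (M - P ** M))^2"
proof -
  have h: "(norm c)^2 = (norm (P *v c))^2 + (norm (c - P *v c))^2" for c
  proof -
    have "inner (P *v c) (c - P *v c) = inner c (P *v (c - P *v c))"
      using inner_adj[of P c] assms(1) by simp
    also have "\<dots> = 0"
      by (simp add: matrix_vector_mult_diff_distrib matrix_vector_mul_assoc assms(2))
    finally have "orthogonal (P *v c) (c - P *v c)" by (simp add: orthogonal_def)
    from norm_add_Pythagorean[OF this] show ?thesis by simp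
  qed
  show ?thesis
    unfolding frob_cols column_mult column_diff sum.distrib[symmetric]
    by (intro sum.cong refl h)
qed

lemma pyth_r:
  assumes "ct P = P" "P ** P = P"
  shows "(frob_norm M)^2 = (frob_norm (M ** P))^2 + (frob_norm (M - M ** P))^2"
proof -
  have 1: "frob_norm (M ** P) = frob_norm (P ** ct M)"
    using frob_ct[of "M ** P"] by (simp add: ct_mult assms(1))
  have 2: "frob_norm (M - M ** P) = frob_norm (ct M - P ** ct M)"
    using frob_ct[of "M - M ** P"] by (simp add: ct_mult ct_diff assms(1))
  show ?thesis using pyth_l[OF assms, of "ct M"] unfolding 1 2 frob_ct .
qed

lemma solve_vec:
  fixes A :: "complex^'n^'m"
  shows "\<exists>z. (ct A ** A) *v z = ct A *v y"
proof -
  define S where "S = range (\<lambda>z. (ct A ** A) *v z)"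
  have sub: "subspace S" unfolding S_def
    by (rule linear_subspace_image[OF matrix_vector_mul_linear subspace_UNIV])
  obtain u w where u: "u \<in> span S" and w: "\<And>t. t \<in> span S \<Longrightarrow> orthogonal w t"
      and uw: "ct A *v y = u + w"
    using orthogonal_subspace_decomp_exists by blast
  have "orthogonal w ((ct A ** A) *v w)"
    using w[of "(ct A ** A) *v w"] by (simp add: S_def span_base)
  then have "inner (A *v w) (A *v w) = 0"
    by (simp add: orthogonal_def inner_adj matrix_vector_mul_assoc[symmetric])
  then have Aw: "A *v w = 0" by simp
  have "inner w (ct A *v y) = 0"
    by (metis Aw inner_adj inner_zero_left)
  moreover have "inner w u = 0" using w[OF u] by (simp add: orthogonal_def)
  ultimately have "inner w w = 0"
    by (simp add: uw inner_add_right)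
  then have "w = 0" by simp
  moreover have "span S = S" using sub by (rule span_eq_iff[THEN iffD2])
  ultimately have "ct A *v y \<in> S" using uw u by (metis add.right_neutral)
  then show ?thesis unfolding S_def by auto
qed

lemma solve_mat:
  fixes A :: "complex^'n^'m"
  shows "\<exists>Z. ct A ** A ** Z = ct A"
proof -
  have "\<forall>j. \<exists>z. (ct A ** A) *v z = ct A *v axis j 1"
    using solve_vec by blast
  then obtain zf where zf: "\<And>j. (ct A ** A) *v zf j = ct A *v axis j 1"
    by metis
  define Z where "Z = (\<chi> i j. zf j $ i)"
  have "(ct A ** A ** Z) $ i $ j = ct A $ i $ j" for i j
  proof -
    have "(ct A ** A ** Z) $ i $ j = ((ct A ** A) *v zf j) $ i"
      by (simp add: Z_def matrix_matrix_mult_def matrix_vector_mult_def)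
    also have "\<dots> = (ct A *v axis j 1) $ i" by (simp add: zf)
    also have "\<dots> = ct A $ i $ j"
      by (simp add: matrix_vector_mult_def axis_def if_distrib cong: if_cong)
    finally show ?thesis .
  qed
  then show ?thesis by (auto simp: vec_eq_iff)
qed

definition penrose :: "complex^'n^'m \<Rightarrow> complex^'m^'n \<Rightarrow> bool" where
  "penrose A X \<longleftrightarrow> A ** X ** A = A \<and> X ** A ** X = X \<and>
      ct (A ** X) = A ** X \<and> ct (X ** A) = X ** A"

lemma herm_of: "ct M ** M = ct M \<Longrightarrow> ct M = M"
  by (metis ct_ct ct_mult)

lemma penrose_exists: "\<exists>X. penrose A X"
proof -
  obtain Z where Z: "ct A ** A ** Z = ct A" using solve_mat by blast
  obtain W where W: "ct (ct A) ** ct A ** W = ct (ct A)" using solve_mat by blast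
  have W': "A ** ct A ** W = A" using W by simp
  define Q where "Q = A ** Z"
  define R where "R = ct A ** W"
  have "ct Q ** Q = ct Q"
    unfolding Q_def ct_mult
    by (metis Z matrix_mul_assoc ct_ct ct_mult)
  then have Qh: "ct Q = Q" by (rule herm_of)
  have "ct A ** Q = ct A" unfolding Q_def by (metis Z matrix_mul_assoc)
  then have "ct Q ** A = A" by (metis ct_ct ct_mult)
  then have AZA: "A ** Z ** A = A" using Qh Q_def by simp
  have AR: "A ** R = A" unfolding R_def by (metis W' matrix_mul_assoc)
  have "ct R ** R = ct R"
    unfolding R_def ct_mult ct_ct
    by (metis W' matrix_mul_assoc)
  then have Rh: "ct R = R" by (rule herm_of)
  have RR: "R ** R = R" using \<open>ct R ** R = ct R\<close> Rh by simp
  have RZA: "R ** Z ** A = R"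
  proof -
    have "R = ct W ** A" using Rh unfolding R_def ct_mult by simp
    then show ?thesis by (metis AZA matrix_mul_assoc)
  qed
  define X where "X = R ** Z"
  have "penrose A X"
    unfolding penrose_def
  proof (intro conjI)
    show "A ** X ** A = A" unfolding X_def by (metis AR AZA matrix_mul_assoc)
    show "X ** A ** X = X" unfolding X_def by (metis RR RZA matrix_mul_assoc)
    show "ct (A ** X) = A ** X" unfolding X_def
      by (metis AR Q_def Qh matrix_mul_assoc)
    show "ct (X ** A) = X ** A" unfolding X_def using RZA Rh by simp
  qed
  then show ?thesis by blast
qed

lemma penrose_unique:
  assumes "penrose A X" "penrose A Y" shows "X = Y"
proof -
  have a: "A ** X ** A = A" "X ** A ** X = X" "ct (A ** X) = A ** X" "ct (X ** A) = X ** A"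
    and b: "A ** Y ** A = A" "Y ** A ** Y = Y" "ct (A ** Y) = A ** Y" "ct (Y ** A) = Y ** A"
    using assms unfolding penrose_def by auto
  have "X = X ** (A ** X)" using a(2) by (simp add: matrix_mul_assoc)
  also have "\<dots> = X ** (ct X ** ct A)" by (metis a(3) ct_mult)
  also have "\<dots> = X ** (ct X ** ct (A ** Y ** A))" using b(1) by simp
  also have "\<dots> = X ** (ct (A ** X) ** ct (A ** Y))"
    by (simp add: ct_mult matrix_mul_assoc)
  also have "\<dots> = X ** A ** Y"
    using a(1) by (simp add: a(3) b(3) matrix_mul_assoc)
  finally have 1: "X = X ** A ** Y" .
  have "Y = (Y ** A) ** Y" using b(2) by simp
  also have "\<dots> = (ct A ** ct Y) ** Y" by (metis b(4) ct_mult)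
  also have "\<dots> = (ct (A ** X ** A) ** ct Y) ** Y" using a(1) by simp
  also have "\<dots> = (ct (X ** A) ** ct (Y ** A)) ** Y"
    by (simp add: ct_mult matrix_mul_assoc)
  also have "\<dots> = X ** A ** (Y ** A ** Y)"
    by (simp add: a(4) b(4) matrix_mul_assoc)
  also have "\<dots> = X ** A ** Y" using b(2) by simp
  finally have 2: "Y = X ** A ** Y" .
  from 1 2 show ?thesis by simp
qed

lemma mp_penrose: "penrose A (mp_inverse A)"
proof -
  have "\<exists>!X. penrose A X" using penrose_exists penrose_unique by blast
  then have "penrose A (THE X. penrose A X)" by (rule theI')
  moreover have "mp_inverse A = (THE X. penrose A X)"
    unfolding mp_inverse_def penrose_def by simp
  ultimately show ?thesis by simp
qed

lemma main_bound:
  fixes A B :: "complex^'n^'m" and X Y :: "complex^'m^'n"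
  assumes pA: "penrose A X" and pB: "penrose B Y"
  defines "E \<equiv> B - A"
  shows "(frob_norm (Y - X))^2 \<le>
     (spec_norm X)^4 * ((frob_norm E)^2 - (frob_norm (E ** Y ** B))^2)
   + (spec_norm Y)^4 * ((frob_norm E)^2 - (frob_norm (A ** X ** E))^2)
   + (frob_norm (Y ** E ** X))^2"
proof -
  have a: "A ** X ** A = A" "X ** A ** X = X" "ct (A ** X) = A ** X" "ct (X ** A) = X ** A"
    using pA unfolding penrose_def by auto
  have b: "B ** Y ** B = B" "Y ** B ** Y = Y" "ct (B ** Y) = B ** Y" "ct (Y ** B) = Y ** B"
    using pB unfolding penrose_def by auto
  have a1: "X = ct A ** ct X ** X"
  proof -
    have "X = ct (X ** A) ** X" using a(2) a(4) by simp
    then show ?thesis by (simp add: ct_mult)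
  qed
  have a2: "ct A ** (A ** X) = ct A"
  proof -
    have "ct A ** (A ** X) = ct A ** ct (A ** X)" using a(3) by simp
    also have "\<dots> = ct (A ** X ** A)" by (simp add: ct_mult)
    finally show ?thesis using a(1) by simp
  qed
  have b1: "Y = Y ** ct Y ** ct B"
  proof -
    have "Y = Y ** ct (B ** Y)" using b(2) b(3) by (simp add: matrix_mul_assoc)
    then show ?thesis by (simp add: ct_mult matrix_mul_assoc)
  qed
  have b2: "Y ** B ** ct B = ct B"
  proof -
    have "Y ** B ** ct B = ct (Y ** B) ** ct B" using b(4) by simp
    also have "\<dots> = ct (B ** (Y ** B))" by (simp add: ct_mult)
    finally show ?thesis using b(1) by (simp add: matrix_mul_assoc)
  qed
  have a3': "ct X ** ct A = A ** X" using a(3) by (simp add: ct_mult)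
  have b1': "Y ** (ct Y ** ct B) = Y" using b1 by (simp add: matrix_mul_assoc)
  have b1g: "Y ** (ct Y ** (ct B ** M)) = Y ** M" for M :: "complex^'k^'m"
    using b1 by (metis matrix_mul_assoc)
  have b4g: "ct B ** (ct Y ** M) = Y ** (B ** M)" for M :: "complex^'k^'n"
    using b(4) by (simp add: ct_mult matrix_mul_assoc)
  have b2g: "Y ** (B ** (ct B ** M)) = ct B ** M" for M :: "complex^'k^'m"
    using b2 by (metis matrix_mul_assoc)
  have a1g: "ct A ** (ct X ** X) = X" using a1 by (simp add: matrix_mul_assoc)
  define P1 where "P1 = Y ** B"
  define P2 where "P2 = A ** X"
  define D where "D = Y - X"
  have P1h: "ct P1 = P1" "P1 ** P1 = P1"
    unfolding P1_def using b by (auto simp: matrix_mul_assoc)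
  have P2h: "ct P2 = P2" "P2 ** P2 = P2"
    unfolding P2_def using a by (auto simp: matrix_mul_assoc)
  have i1: "P1 ** D ** P2 = - (Y ** E ** X)"
  proof -
    have "P1 ** D ** P2 = Y ** B ** Y ** A ** X - Y ** B ** X ** A ** X"
      unfolding P1_def D_def P2_def by (simp add: mm_diff_l mm_diff_r matrix_mul_assoc)
    also have "\<dots> = Y ** A ** X - Y ** B ** X"
      using b(2) a(2) by (simp add: matrix_mul_assoc[symmetric])
    also have "\<dots> = - (Y ** E ** X)"
      unfolding E_def by (simp add: mm_diff_l mm_diff_r)
    finally show ?thesis .
  qed
  have i2: "P1 ** D - P1 ** D ** P2 = Y ** ct ((E - A ** X ** E) ** Y)"
  proof -
    have l: "P1 ** D - P1 ** D ** P2 = Y - Y ** A ** X"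
    proof -
      have "P1 ** D = Y - Y ** B ** X"
        unfolding P1_def D_def by (simp add: mm_diff_l b(2))
      then show ?thesis using i1 unfolding E_def
        by (simp add: mm_diff_l mm_diff_r)
    qed
    have "Y ** ct ((E - A ** X ** E) ** Y) = Y - Y ** (A ** X)"
      unfolding E_def
      by (simp add: ct_mult ct_diff mm_diff_l mm_diff_r a3' b1' b1g a2 matrix_mul_assoc[symmetric])
    then show ?thesis using l by (simp add: matrix_mul_assoc)
  qed
  have i3: "D - P1 ** D = ct (X ** (E - E ** Y ** B)) ** X"
  proof -
    have l: "D - P1 ** D = Y ** B ** X - X"
      unfolding P1_def D_def by (simp add: mm_diff_l b(2))
    have "ct (X ** (E - E ** Y ** B)) ** X = Y ** (B ** X) - X"
      unfolding E_def
      by (simp add: ct_mult ct_diff mm_diff_l mm_diff_r b4g b2g a1g matrix_mul_assoc[symmetric])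
    then show ?thesis using l by (simp add: matrix_mul_assoc)
  qed
  have sD: "(frob_norm D)^2 = (frob_norm (P1 ** D ** P2))^2 + (frob_norm (P1 ** D - P1 ** D ** P2))^2
       + (frob_norm (D - P1 ** D))^2"
    using pyth_l[OF P1h, of D] pyth_r[OF P2h, of "P1 ** D"] by simp
  have t1: "frob_norm (P1 ** D ** P2) = frob_norm (Y ** E ** X)"
    using i1 frob_uminus by simp
  have t2: "frob_norm (P1 ** D - P1 ** D ** P2) \<le> (spec_norm Y)^2 * frob_norm (E - A ** X ** E)"
  proof -
    have "frob_norm (P1 ** D - P1 ** D ** P2) \<le> spec_norm Y * frob_norm ((E - A ** X ** E) ** Y)"
      unfolding i2 using frob_mult_l[of Y "ct ((E - A ** X ** E) ** Y)"] unfolding frob_ct .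
    also have "\<dots> \<le> spec_norm Y * (frob_norm (E - A ** X ** E) * spec_norm Y)"
      by (intro mult_left_mono frob_mult_r spec_nonneg)
    finally show ?thesis by (simp add: power2_eq_square mult_ac)
  qed
  have t3: "frob_norm (D - P1 ** D) \<le> (spec_norm X)^2 * frob_norm (E - E ** Y ** B)"
  proof -
    have "frob_norm (D - P1 ** D) \<le> frob_norm (X ** (E - E ** Y ** B)) * spec_norm X"
      unfolding i3 using frob_mult_r[of "ct (X ** (E - E ** Y ** B))" X] unfolding frob_ct .
    also have "\<dots> \<le> (spec_norm X * frob_norm (E - E ** Y ** B)) * spec_norm X"
      by (intro mult_right_mono frob_mult_l spec_nonneg)
    finally show ?thesis by (simp add: power2_eq_square mult_ac)
  qed
  have e2: "(frob_norm (E - A ** X ** E))^2 = (frob_norm E)^2 - (frob_norm (A ** X ** E))^2"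
    using pyth_l[OF P2h, of E] unfolding P2_def by simp
  have e3: "(frob_norm (E - E ** Y ** B))^2 = (frob_norm E)^2 - (frob_norm (E ** Y ** B))^2"
    using pyth_r[OF P1h, of E] unfolding P1_def by (simp add: matrix_mul_assoc)
  have sq: "u^2 \<le> (s^2 * v)^2" if "0 \<le> u" "u \<le> s^2 * v" for u s v :: real
    using that by (intro power_mono) auto
  have q2: "(frob_norm (P1 ** D - P1 ** D ** P2))^2 \<le> (spec_norm Y)^4 * (frob_norm (E - A ** X ** E))^2"
    using sq[OF frob_nonneg t2] by (simp add: power_mult_distrib flip: power_mult)
  have q3: "(frob_norm (D - P1 ** D))^2 \<le> (spec_norm X)^4 * (frob_norm (E - E ** Y ** B))^2"
    using sq[OF frob_nonneg t3] by (simp add: power_mult_distrib flip: power_mult)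
  show ?thesis
    using sD t1 q2[unfolded e2] q3[unfolded e3] unfolding D_def by simp
qed

theorem corollary3p3:
  fixes A B :: "complex^'n^'m"
  defines "E \<equiv> B - A"
  defines "\<beta>1 \<equiv> (spec_norm (mp_inverse A))^4 * ((frob_norm E)^2 - (frob_norm (E ** mp_inverse B ** B))^2)
              + (spec_norm (mp_inverse B))^4 * ((frob_norm E)^2 - (frob_norm (A ** mp_inverse A ** E))^2)"
  defines "\<beta>2 \<equiv> (spec_norm (mp_inverse A))^4 * ((frob_norm E)^2 - (frob_norm (B ** mp_inverse B ** E))^2)
              + (spec_norm (mp_inverse B))^4 * ((frob_norm E)^2 - (frob_norm (E ** mp_inverse A ** A))^2)"
  shows "(frob_norm (mp_inverse B - mp_inverse A))^2 \<le>
           min (\<beta>1 + (frob_norm (mp_inverse B ** E ** mp_inverse A))^2)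
               (\<beta>2 + (frob_norm (mp_inverse A ** E ** mp_inverse B))^2)"
proof -
  let ?X = "mp_inverse A" and ?Y = "mp_inverse B"
  have 1: "(frob_norm (?Y - ?X))^2 \<le> \<beta>1 + (frob_norm (?Y ** E ** ?X))^2"
    using main_bound[OF mp_penrose[of A] mp_penrose[of B]] unfolding \<beta>1_def E_def by simp
  have AB: "A - B = - E" unfolding E_def by simp
  have bd: "(frob_norm (?X - ?Y))^2 \<le>
     (spec_norm ?Y)^4 * ((frob_norm (- E))^2 - (frob_norm ((- E) ** ?X ** A))^2)
   + (spec_norm ?X)^4 * ((frob_norm (- E))^2 - (frob_norm (B ** ?Y ** (- E)))^2)
   + (frob_norm (?X ** (- E) ** ?Y))^2"
    using main_bound[OF mp_penrose[of B] mp_penrose[of A]] unfolding AB .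
  have f0: "frob_norm (- E) = frob_norm E" by (rule frob_uminus)
  have f1: "frob_norm (?X - ?Y) = frob_norm (?Y - ?X)"
    by (metis frob_uminus minus_diff_eq)
  have f2: "frob_norm ((- E) ** ?X ** A) = frob_norm (E ** ?X ** A)"
    by (simp only: mm_neg_r frob_uminus)
  have f3: "frob_norm (B ** ?Y ** (- E)) = frob_norm (B ** ?Y ** E)"
    by (simp only: mm_neg_l frob_uminus)
  have f4: "frob_norm (?X ** (- E) ** ?Y) = frob_norm (?X ** E ** ?Y)"
    by (simp only: mm_neg_l mm_neg_r frob_uminus)
  have 2: "(frob_norm (?Y - ?X))^2 \<le> \<beta>2 + (frob_norm (?X ** E ** ?Y))^2"
    using bd unfolding f0 f1 f2 f3 f4 \<beta>2_def by linarith
  from 1 2 show ?thesis by simp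
qed

end
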